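(* For every integer $n\ge1$, $$\sum_{k=0}^{2n-1}(-1)^k\binom{2n-1}{k}^2H_k=\frac{(-16)^n}{8n\binom{2n}{n}}.$$
   Context: $H_k=\sum_{i=1}^k1/i$ with $H_0=0$. *)

theory Defs
  imports "HOL-Analysis.Analysis"
begin

end

theory Submission
  imports Defs "HOL-Computational_Algebra.Polynomial"
begin


lemma polyV:
  fixes m r :: nat
  assumes "r \<le> m"
  shows "(\<Sum>k\<le>r. (-1::real)^k * real (m choose k) * real (m choose (r-k)))
         = (if even r then (-1)^(r div 2) * real (m choose (r div 2)) else 0)"
proof -
  have "coeff ([:1,-1:]^m * [:1,1:]^m) r = (\<Sum>k\<le>r. (-1::real)^k * real (m choose k) * real (m choose (r-k)))"
    unfolding coeff_mult
    by (rule sum.cong) (use assms in \<open>auto simp: coeff_linear_poly_power of_nat_poly\<close>)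
  moreover have "[:1,-1:]^m * [:1,1:]^m = (1 + monom (-1::real) 2)^m"
    proof - have "[:1,0,-1::real:] = 1 + [:0,0,-1:]" by (simp add: one_pCons)
    then show ?thesis by (simp add: power_mult_distrib[symmetric] monom_altdef numeral_2_eq_2)
  qed
  moreover have "(1 + monom (-1::real) 2)^m = (\<Sum>k\<le>m. monom (of_nat (m choose k) * (-1)^k) (2*k))"
    by (subst add.commute, subst binomial_ring) (simp add: monom_power smult_monom mult_ac of_nat_poly)
  moreover have "coeff (\<Sum>k\<le>m. monom (of_nat (m choose k) * (-1::real)^k) (2*k)) r
     = (if even r then (-1)^(r div 2) * real (m choose (r div 2)) else 0)"
  proof (cases "even r")
    case True
    then obtain l where l: "r = 2*l" by auto
    have "coeff (\<Sum>k\<le>m. monom (of_nat (m choose k) * (-1::real)^k) (2*k)) r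
       = (\<Sum>k\<le>m. if k = l then of_nat (m choose k) * (-1::real)^k else 0)"
      unfolding coeff_sum by (rule sum.cong) (auto simp: l)
    also have "\<dots> = of_nat (m choose l) * (-1)^l" using assms l by simp
    finally show ?thesis using l by simp
  next
    case False
    then show ?thesis unfolding coeff_sum by (auto intro!: sum.neutral)
  qed
  ultimately show ?thesis by simp
qed


lemma alt1: "(\<Sum>i\<le>m. (-1::real)^i * real (Suc m choose Suc i)) = 1"
proof -
  have "(\<Sum>i\<le>Suc m. (-1::real)^i * of_nat (Suc m choose i)) = 0"
    by (rule choose_alternating_sum) simp
  then have "1 + (\<Sum>i\<le>m. (-1::real)^(Suc i) * of_nat (Suc m choose Suc i)) = 0"
    by (subst (asm) sum.atMost_Suc_shift) simp
  then show ?thesis by (simp add: sum_negf)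
qed

lemma choose_div: "real (m choose i) / real (Suc i) = real (Suc m choose Suc i) / real (Suc m)"
proof -
  have "real (Suc m) * real (m choose i) = real (Suc m choose Suc i) * real (Suc i)"
    using Suc_times_binomial_eq[of m i] by (metis of_nat_mult)
  then show ?thesis by (simp add: field_simps del: binomial_Suc_Suc of_nat_Suc)
qed

lemma harm_alt: "harm m = (\<Sum>i<m. (-1::real)^i * real (m choose (i+1)) / real (i+1))"
proof (induction m)
  case 0
  then show ?case by (simp add: harm_def)
next
  case (Suc m)
  have "(\<Sum>i<Suc m. (-1::real)^i * real (Suc m choose (i+1)) / real (i+1))
     = (\<Sum>i<Suc m. (-1::real)^i * (real (m choose i) / real (Suc i)))
       + (\<Sum>i<Suc m. (-1::real)^i * real (m choose (i+1)) / real (i+1))"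
    by (simp add: sum.distrib[symmetric] add_divide_distrib algebra_simps)
  also have "(\<Sum>i<Suc m. (-1::real)^i * real (m choose (i+1)) / real (i+1)) = harm m"
    using Suc by simp
  also have "(\<Sum>i<Suc m. (-1::real)^i * (real (m choose i) / real (Suc i)))
       = (\<Sum>i\<le>m. (-1::real)^i * real (Suc m choose Suc i)) / real (Suc m)"
    by (simp add: choose_div sum_divide_distrib lessThan_Suc_atMost del: binomial_Suc_Suc of_nat_Suc)
  also have "\<dots> = 1 / real (Suc m)" by (simp only: alt1)
  finally show ?case by (simp add: harm_Suc divide_inverse)
qed

definition hh :: "nat \<Rightarrow> nat \<Rightarrow> real" where
  "hh m k = (\<Sum>i<m-k. (-1::real)^i * real (m choose (k+i+1)) / real (i+1))"

lemma lemA: "k \<le> m \<Longrightarrow> real (m choose k) * (harm m - harm k) = hh m k"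
proof (induction m arbitrary: k)
  case 0
  then show ?case by (simp add: hh_def)
next
  case (Suc m)
  show ?case
  proof (cases k)
    case 0
    then show ?thesis by (simp add: hh_def harm_alt harm_def)
  next
    case (Suc k')
    show ?thesis
    proof (cases "k = Suc m")
      case True
      then show ?thesis by (simp add: hh_def)
    next
      case False
      with Suc \<open>k \<le> Suc m\<close> have k'm: "k' < m" by auto
      have IH1: "real (m choose k') * (harm m - harm k') = hh m k'"
        using Suc.IH k'm by simp
      have IH2: "real (m choose Suc k') * (harm m - harm (Suc k')) = hh m (Suc k')"
        using Suc.IH k'm by simp
      have hrec: "hh (Suc m) (Suc k') = hh m k' + hh m (Suc k')"
      proof -
        have "hh (Suc m) (Suc k') = (\<Sum>i<m-k'. (-1::real)^i * real (m choose (k'+i+1)) / real (i+1))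
              + (\<Sum>i<m-k'. (-1::real)^i * real (m choose (Suc k'+i+1)) / real (i+1))"
          unfolding hh_def by (simp add: sum.distrib[symmetric] add_divide_distrib algebra_simps)
        also have "(\<Sum>i<m-k'. (-1::real)^i * real (m choose (Suc k'+i+1)) / real (i+1)) = hh m (Suc k')"
        proof -
          have "m - k' = Suc (m - Suc k')" using k'm by simp
          then show ?thesis unfolding hh_def by (simp add: lessThan_Suc)
        qed
        finally show ?thesis by (simp add: hh_def)
      qed
      have key: "real (m choose k') * real (Suc m) = real (Suc m choose Suc k') * real (Suc k')"
        using Suc_times_binomial_eq[of m k'] by (metis of_nat_mult mult.commute)
      have "real (Suc m choose Suc k') * (harm (Suc m) - harm (Suc k'))
          = real (m choose k') * (harm m - harm k') + real (m choose Suc k') * (harm m - harm (Suc k'))"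
      proof -
        have e: "real (Suc m choose Suc k') = real (m choose k') + real (m choose Suc k')" by simp
        show ?thesis unfolding harm_Suc e using key
          by (simp add: field_simps del: binomial_Suc_Suc of_nat_Suc) (simp add: algebra_simps)
      qed
      then show ?thesis using IH1 IH2 hrec Suc by simp
    qed
  qed
qed


definition pff :: "nat \<Rightarrow> real \<Rightarrow> real" where
  "pff N x = (\<Sum>l\<le>N. (-1::real)^l * real (N choose l) / (x + real l))"

lemma pff_rec: "pff (Suc N) x = pff N x - pff N (x+1)"
proof -
  have "pff (Suc N) x = 1/x + (\<Sum>l\<le>N. (-1::real)^(Suc l) * real (Suc N choose Suc l) / (x + real (Suc l)))"
    unfolding pff_def by (subst sum.atMost_Suc_shift) simp
  also have "\<dots> = 1/x + (\<Sum>l\<le>N. (-1::real)^(Suc l) * real (N choose Suc l) / (x + real (Suc l)))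
      + (\<Sum>l\<le>N. (-1::real)^(Suc l) * real (N choose l) / (x + real (Suc l)))"
  proof -
    have t: "(-1::real)^(Suc l) * real (Suc N choose Suc l) / d = (-1)^Suc l * real (N choose Suc l)/d + (-1)^Suc l * real(N choose l)/d" for l d
      by (subst binomial_Suc_Suc, subst of_nat_add, subst distrib_left, subst add_divide_distrib, rule add.commute)
    show ?thesis by (simp only: t sum.distrib add.assoc)
  qed
  also have "1/x + (\<Sum>l\<le>N. (-1::real)^(Suc l) * real (N choose Suc l) / (x + real (Suc l)))
      = (\<Sum>l\<le>Suc N. (-1::real)^l * real (N choose l) / (x + real l))"
    by (subst sum.atMost_Suc_shift) simp
  also have "\<dots> = pff N x" unfolding pff_def by simp
  also have "(\<Sum>l\<le>N. (-1::real)^(Suc l) * real (N choose l) / (x + real (Suc l))) = - pff N (x+1)"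
    unfolding pff_def by (simp add: sum_negf[symmetric] algebra_simps)
  finally show ?thesis by simp
qed

lemma pff_closed: "(\<forall>i\<le>N. x + real i \<noteq> 0) \<Longrightarrow> pff N x = fact N / (\<Prod>i\<le>N. (x + real i))"
proof (induction N arbitrary: x)
  case 0
  then show ?case by (simp add: pff_def)
next
  case (Suc N)
  have h1: "\<forall>i\<le>N. x + real i \<noteq> 0" using Suc.prems by auto
  have h2: "\<forall>i\<le>N. (x+1) + real i \<noteq> 0"
  proof (intro allI impI)
    fix i assume "i \<le> N"
    then have "x + real (Suc i) \<noteq> 0" using Suc.prems by auto
    then show "(x+1) + real i \<noteq> 0" by (simp add: algebra_simps)
  qed
  define A where "A = (\<Prod>i\<le>N. (x + real i))"
  define P where "P = (\<Prod>i\<le>Suc N. (x + real i))"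
  define B where "B = (\<Prod>i\<le>N. ((x+1) + real i))"
  have P1: "(\<Prod>i\<le>Suc N. (x + real i)) = A * (x + real (Suc N))"
    unfolding A_def by simp
  have P2: "(\<Prod>i\<le>Suc N. (x + real i)) = x * B"
    unfolding B_def by (subst prod.atMost_Suc_shift) (simp add: algebra_simps)
  have A0: "A \<noteq> 0" unfolding A_def using h1 by (simp add: prod_zero_iff)
  have B0: "B \<noteq> 0" unfolding B_def using h2 by (simp add: prod_zero_iff)
  have x0: "x \<noteq> 0" using Suc.prems by (metis add.right_neutral le0 of_nat_0)
  have xN: "x + real (Suc N) \<noteq> 0" using Suc.prems by blast
  have "pff (Suc N) x = fact N / A - fact N / B"
    using pff_rec Suc.IH h1 h2 A_def B_def by simp
  also have "\<dots> = fact N * (x + real (Suc N)) / (A * (x + real (Suc N))) - fact N * x / (x * B)"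
    using xN x0 by simp
  also have "\<dots> = fact N * (x + real (Suc N)) / P - fact N * x / P"
    unfolding P_def P1[symmetric] P2[symmetric] by simp
  also have "\<dots> = (fact N * (x + real (Suc N)) - fact N * x) / P"
    by (simp only: diff_divide_distrib)
  also have "\<dots> = fact (Suc N) / P"
    by (simp add: algebra_simps)
  finally show ?case unfolding P_def .
qed

lemma prodQ: "(\<Prod>i<2*n. (real i - (2*real n - 1)/2)) = (-1)^n * (\<Prod>i<n. ((2*real i+1)/2))^2"
proof (induction n)
  case 0
  then show ?case by simp
next
  case (Suc n)
  have e: "2*Suc n = Suc (Suc (2*n))" by simp
  define g where "g = (\<lambda>i::nat. real i - (2*real n - 1)/2)"
  have "(\<Prod>i<2*Suc n. (real i - (2*real (Suc n) - 1)/2))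
      = (real 0 - (2*real (Suc n) - 1)/2) * (\<Prod>i<Suc (2*n). (real (Suc i) - (2*real (Suc n) - 1)/2))"
    by (simp only: e prod.lessThan_Suc_shift)
  also have "(\<Prod>i<Suc (2*n). (real (Suc i) - (2*real (Suc n) - 1)/2)) = (\<Prod>i<Suc (2*n). g i)"
    unfolding g_def by (rule prod.cong) (simp_all add: algebra_simps diff_divide_distrib add_divide_distrib)
  also have "(real 0 - (2*real (Suc n) - 1)/2) = - (2*real n+1)/2" by (simp add: field_simps)
  finally have "(\<Prod>i<2*Suc n. (real i - (2*real (Suc n) - 1)/2))
      = (- (2*real n+1)/2) * (\<Prod>i<Suc (2*n). g i)" .
  also have "(\<Prod>i<Suc (2*n). g i) = (\<Prod>i<2*n. g i) * ((2*real n+1)/2)"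
    by (simp add: g_def algebra_simps diff_divide_distrib)
  also have "(\<Prod>i<2*n. g i) = (-1)^n * (\<Prod>i<n. ((2*real i+1)/2))^2"
    unfolding g_def by (rule Suc.IH)
  also have "(- (2*real n+1)/2) * ((-1)^n * (\<Prod>i<n. ((2*real i+1)/2))^2 * ((2*real n+1)/2))
     = (-1)^(Suc n) * ((\<Prod>i<n. ((2*real i+1)/2)) * ((2*real n+1)/2))^2"
  proof -
    have gen: "\<And>c q::real. (-c) * ((-1)^n * q^2 * c) = (-1)^Suc n * (q*c)^2"
      by (simp add: power2_eq_square algebra_simps)
    show ?thesis unfolding minus_divide_left[symmetric] by (rule gen)
  qed
  also have "\<dots> = (-1)^(Suc n) * (\<Prod>i<Suc n. ((2*real i+1)/2))^2" by simp
  finally show ?case .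
qed
lemma fact_double: "fact (2*n) = (2::real)^n * fact n * (\<Prod>i<n. (2*real i+1))"
proof (induction n)
  case 0
  then show ?case by simp
next
  case (Suc n)
  have "fact (2*Suc n) = (2*real n + 2) * (2*real n+1) * (fact (2*n) :: real)"
    by (simp add: algebra_simps)
  then show ?case unfolding Suc.IH by (simp add: algebra_simps)
qed
lemma swap_tri: "(\<Sum>k\<le>(m::nat). \<Sum>i<m-k. F k i) = (\<Sum>i<m. \<Sum>k<m-i. (F k i :: real))"
proof -
  have "(\<Sum>k\<le>m. \<Sum>i<m-k. F k i) = (\<Sum>k\<in>{..m}. \<Sum>i\<in>{i\<in>{..<m}. k+i<m}. F k i)"
    by (rule sum.cong) (auto intro: sum.cong)
  also have "\<dots> = (\<Sum>i\<in>{..<m}. \<Sum>k\<in>{k\<in>{..m}. k+i<m}. F k i)"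
    by (rule sum.swap_restrict) auto
  also have "\<dots> = (\<Sum>i<m. \<Sum>k<m-i. F k i)"
    by (rule sum.cong) (auto intro: sum.cong)
  finally show ?thesis .
qed

lemma sum_pairs: "(\<Sum>r<2*(n::nat). (f r::real)) = (\<Sum>l<n. f (2*l) + f (2*l+1))"
  by (induction n) (simp_all add: add.assoc)

lemma gen_alg: fixes ss pp FF DD NN :: real
  assumes "ss * ss = 1" "pp>0" "FF>0" "DD>0" "NN>0"
  shows "(1/4) * (pp * FF * DD/(2 * NN))/(ss * (DD/pp)^2) = (ss * pp^4)/(8 * NN * (pp * FF * DD/FF^2))"
proof -
  have s0: "ss \<noteq> 0" using assms(1) by auto
  have "(1/4) * (pp * FF * DD/(2 * NN))/(ss * (DD/pp)^2) = pp^3 * FF/(8 * NN * ss * DD)"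
    using assms s0 by (simp add: field_simps power2_eq_square power3_eq_cube)
  also have "\<dots> = ss * pp^3 * FF/(8 * NN * DD)"
    using assms s0 by (simp add: field_simps)
  also have "\<dots> = (ss * pp^4)/(8 * NN * (pp * FF * DD/FF^2))"
    using assms by (simp add: field_simps power2_eq_square power3_eq_cube power4_eq_xxxx)
  finally show ?thesis .
qed

theorem mainTheorem9:
  fixes n :: nat
  assumes "n \<ge> 1"
  shows "(\<Sum>k=0..2*n-1. (-1::real)^k * (real ((2*n-1) choose k))^2 * harm k)
         = (-16::real)^n / (8 * real n * real ((2*n) choose n))"
proof -
  define m where "m = 2*n - 1"
  have mS: "Suc m = 2*n" using assms unfolding m_def by simp
  have modd: "odd m" using assms unfolding m_def by simp
  have mreal: "real m = 2*real n - 1" using arg_cong[OF mS, of real] by simp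
  define W where "W = (\<lambda>r. if even r then (-1::real)^(r div 2) * real (m choose (r div 2)) else 0)"
  define g where "g = (\<lambda>l::nat. (-1::real)^l * real (m choose l) / (real m - 2*real l))"
  define T where "T = (\<Sum>k\<le>m. (-1::real)^k * real (m choose k) * hh m k)"
  define Z where "Z = (\<Sum>k\<le>m. (-1::real)^k * (real (m choose k))^2)"
  have S1: "(\<Sum>k=0..2*n-1. (-1::real)^k * (real ((2*n-1) choose k))^2 * harm k) = harm m * Z - T"
  proof -
    have "(\<Sum>k=0..2*n-1. (-1::real)^k * (real ((2*n-1) choose k))^2 * harm k)
        = (\<Sum>k\<le>m. (-1::real)^k * (real (m choose k))^2 * harm m - (-1::real)^k * real (m choose k) * hh m k)"
      unfolding m_def[symmetric] atLeast0AtMost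
    proof (rule sum.cong)
      fix k assume "k \<in> {..m}"
      then have h: "real (m choose k) * (harm m - harm k) = hh m k" by (intro lemA) auto
      then show "(-1::real)^k * (real (m choose k))^2 * harm k
          = (-1::real)^k * (real (m choose k))^2 * harm m - (-1::real)^k * real (m choose k) * hh m k"
        unfolding h[symmetric] by (simp add: power2_eq_square algebra_simps)
    qed simp
    also have "\<dots> = harm m * Z - T"
      unfolding Z_def T_def by (simp add: sum_subtractf sum_distrib_left mult_ac)
    finally show ?thesis .
  qed
  have Z0: "Z = 0"
  proof -
    have "Z = (\<Sum>k\<le>m. (-1::real)^k * real (m choose k) * real (m choose (m-k)))"
      unfolding Z_def by (rule sum.cong) (auto simp: power2_eq_square binomial_symmetric[symmetric])
    also have "\<dots> = 0" using polyV[of m m] modd by simp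
    finally show ?thesis .
  qed
  have T2: "T = (\<Sum>i<m. (-1::real)^i / real (i+1) * W (m - Suc i))"
  proof -
    have "T = (\<Sum>k\<le>m. \<Sum>i<m-k. (-1::real)^k * real (m choose k) * ((-1::real)^i * real (m choose (k+i+1)) / real (i+1)))"
      unfolding T_def hh_def by (simp add: sum_distrib_left)
    also have "\<dots> = (\<Sum>i<m. \<Sum>k<m-i. (-1::real)^k * real (m choose k) * ((-1::real)^i * real (m choose (k+i+1)) / real (i+1)))"
      by (rule swap_tri)
    also have "\<dots> = (\<Sum>i<m. (-1::real)^i / real (i+1) * W (m - Suc i))"
    proof (rule sum.cong)
      fix i assume "i \<in> {..<m}"
      then have im: "i < m" by simp
      have "(\<Sum>k<m-i. (-1::real)^k * real (m choose k) * ((-1::real)^i * real (m choose (k+i+1)) / real (i+1)))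
          = (-1::real)^i / real (i+1) * (\<Sum>k\<le>m - Suc i. (-1::real)^k * real (m choose k) * real (m choose ((m - Suc i) - k)))"
      proof -
        have e: "{..<m-i} = {..m - Suc i}" using im by auto
        show ?thesis unfolding e sum_distrib_left
        proof (rule sum.cong)
          fix k assume "k \<in> {..m - Suc i}"
          then have "k + i + 1 \<le> m" using im by auto
          then have "m choose (k+i+1) = m choose (m - (k+i+1))" by (rule binomial_symmetric)
          moreover have "m - (k+i+1) = (m - Suc i) - k" by simp
          ultimately show "(-1::real)^k * real (m choose k) * ((-1::real)^i * real (m choose (k+i+1)) / real (i+1))
             = (-1::real)^i / real (i+1) * ((-1::real)^k * real (m choose k) * real (m choose ((m - Suc i) - k)))"
            by simp
        qed simp
      qed
      also have "\<dots> = (-1::real)^i / real (i+1) * W (m - Suc i)"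
        unfolding W_def by (subst polyV) auto
      finally show "(\<Sum>k<m-i. (-1::real)^k * real (m choose k) * ((-1::real)^i * real (m choose (k+i+1)) / real (i+1)))
          = (-1::real)^i / real (i+1) * W (m - Suc i)" .
    qed simp
    finally show ?thesis .
  qed
  define f where "f = (\<lambda>r. (-1::real)^(m - Suc r) / real (m - r) * W r)"
  have T3: "T = (\<Sum>r<m. f r)"
  proof -
    have "(\<Sum>r<m. f r) = (\<Sum>i<m. f (m - Suc i))" by (rule sum.nat_diff_reindex[symmetric])
    also have "\<dots> = (\<Sum>i<m. (-1::real)^i / real (i+1) * W (m - Suc i))"
    proof (rule sum.cong)
      fix i assume "i \<in> {..<m}"
      then have "m - Suc (m - Suc i) = i" "m - (m - Suc i) = i + 1" by auto
      then show "f (m - Suc i) = (-1::real)^i / real (i+1) * W (m - Suc i)" unfolding f_def by simp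
    qed simp
    finally show ?thesis using T2 by simp
  qed
  have T4: "T = (\<Sum>l<n. g l)"
  proof -
    have "(\<Sum>r<m. f r) = (\<Sum>r<2*n. f r)"
      using mS modd by (simp add: f_def W_def flip: mS)
    also have "\<dots> = (\<Sum>l<n. f (2*l) + f (2*l+1))" by (rule sum_pairs)
    also have "\<dots> = (\<Sum>l<n. g l)"
    proof (rule sum.cong)
      fix l assume "l \<in> {..<n}"
      then have lm: "2*l < m" using mS modd by auto
      have ev: "even (m - Suc (2*l))" using lm modd by auto
      have rr: "real (m - 2*l) = real m - 2 * real l" using lm by (simp add: of_nat_diff)
      show "f (2*l) + f (2*l+1) = g l"
        unfolding f_def W_def g_def using ev rr by simp
    qed simp
    finally show ?thesis using T3 by simp
  qed
  have gsym: "g (m - l) = g l" if "l \<le> m" for l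
  proof -
    have ch: "m choose (m - l) = m choose l" using that by (simp add: binomial_symmetric[symmetric])
    have sg: "(-1::real)^(m-l) = - ((-1::real)^l)"
    proof -
      have ab: "(-1::real)^(m-l) * (-1)^l = -1" using that modd by (simp add: power_add[symmetric])
      have bb: "(-1::real)^l * (-1)^l = 1" by (simp add: power_add[symmetric])
      have "(-1::real)^(m-l) = (-1::real)^(m-l) * ((-1)^l * (-1)^l)" using bb by simp
      also have "\<dots> = ((-1::real)^(m-l) * (-1)^l) * (-1)^l" by (simp only: mult.assoc)
      also have "\<dots> = - ((-1::real)^l)" using ab by simp
      finally show ?thesis .
    qed
    have den: "real m - 2*real (m-l) = -(real m - 2*real l)" using that by (simp add: of_nat_diff)
    have "- ((- 1) ^ l * real (m choose l) / (2 * real l - real m)) = (- 1) ^ l * real (m choose l) / (real m - 2 * real l)"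
      by (simp add: minus_divide_right)
    then show ?thesis unfolding g_def ch sg den by simp
  qed
  have dbl: "(\<Sum>l<2*n. g l) = 2 * (\<Sum>l<n. g l)"
  proof -
    have "(\<Sum>l<2*n. g l) = sum g {0..<n} + sum g {n..<2*n}"
      by (simp add: lessThan_atLeast0 sum.atLeastLessThan_concat)
    also have "sum g {n..<2*n} = sum g {0+n..<n+n}" by (simp add: mult_2)
    also have "\<dots> = (\<Sum>i<n. g (i + n))" by (simp only: sum.shift_bounds_nat_ivl lessThan_atLeast0)
    also have "\<dots> = (\<Sum>i<n. g ((n - Suc i) + n))" by (rule sum.nat_diff_reindex[symmetric])
    also have "\<dots> = (\<Sum>i<n. g i)"
    proof (rule sum.cong)
      fix i assume "i \<in> {..<n}"
      then have "(n - Suc i) + n = m - i" "i \<le> m" using mS by auto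
      then show "g ((n - Suc i) + n) = g i" using gsym by simp
    qed simp
    finally show ?thesis by (simp add: lessThan_atLeast0)
  qed
  define x where "x = - real m / 2"
  have nz: "\<forall>i\<le>m. x + real i \<noteq> 0"
  proof (intro allI impI)
    fix i assume "i \<le> m"
    show "x + real i \<noteq> 0"
    proof
      assume "x + real i = 0"
      then have "real (2*i) = real m" unfolding x_def by simp
      then have "2*i = m" by linarith
      then show False using modd by auto
    qed
  qed
  have PF: "(\<Sum>l<2*n. g l) = - (1/2) * (fact m / (\<Prod>i\<le>m. (x + real i)))"
  proof -
    have "(\<Sum>l<2*n. g l) = (\<Sum>l\<le>m. - (1/2) * ((-1::real)^l * real (m choose l) / (x + real l)))"
      unfolding mS[symmetric] lessThan_Suc_atMost
    proof (rule sum.cong)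
      fix l assume "l \<in> {..m}"
      have den: "real m - 2 * real l = -2 * (x + real l)" unfolding x_def by simp
      have gen: "\<And>a y::real. a/(-2*y) = -(1/2)*(a/y)"
        by (case_tac "y=0") (simp_all add: field_simps)
      show "g l = - (1/2) * ((-1::real)^l * real (m choose l) / (x + real l))"
        unfolding g_def den by (rule gen)
    qed simp
    also have "\<dots> = - (1/2) * pff m x" unfolding pff_def by (simp add: sum_distrib_left)
    also have "\<dots> = - (1/2) * (fact m / (\<Prod>i\<le>m. (x + real i)))" using pff_closed[OF nz] by simp
    finally show ?thesis .
  qed
  have PR: "(\<Prod>i\<le>m. (x + real i)) = (-1)^n * (\<Prod>i<n. ((2*real i+1)/2))^2"
  proof -
    have "(\<Prod>i\<le>m. (x + real i)) = (\<Prod>i<2*n. (real i - (2*real n - 1)/2))"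
      unfolding mS[symmetric] lessThan_Suc_atMost x_def mreal by (rule prod.cong) (simp_all add: algebra_simps add_divide_distrib[symmetric])
    then show ?thesis using prodQ by simp
  qed
  define D where "D = (\<Prod>i<n. (2*real i+1))"
  have Dpos: "D > 0" unfolding D_def by (rule prod_pos) auto
  have D': "(\<Prod>i<n. ((2*real i+1)/2)) = D / 2^n"
    unfolding D_def by (simp add: prod_dividef)
  have F2: "fact (2*n) = (2::real)^n * fact n * D" unfolding D_def by (rule fact_double)
  have Fm: "fact (2*n) = real (2*n) * (fact m :: real)"
    unfolding mS[symmetric] by simp
  have Cb: "real ((2*n) choose n) = fact (2*n) / (fact n)^2"
    by (simp add: binomial_fact power2_eq_square)
  have npos: "real n > 0" using assms by simp
  have Tv: "T = (1/2) * (\<Sum>l<2*n. g l)" using T4 dbl by simp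
  have S: "(\<Sum>k=0..2*n-1. (-1::real)^k * (real ((2*n-1) choose k))^2 * harm k)
      = (1/4) * fact m / ((-1)^n * (D / 2^n)^2)"
  proof -
    have "(\<Sum>k=0..2*n-1. (-1::real)^k * (real ((2*n-1) choose k))^2 * harm k) = - T"
      using S1 Z0 by simp
    also have "\<dots> = (1/4) * (fact m / (\<Prod>i\<le>m. (x + real i)))"
      unfolding Tv PF by simp
    also have "\<dots> = (1/4) * fact m / ((-1)^n * (D / 2^n)^2)"
      unfolding PR D' by simp
    finally show ?thesis .
  qed
  have fm: "(fact m::real) = 2^n * fact n * D / (2 * real n)"
    using F2 Fm npos by (simp add: field_simps)
  have m16: "(-16::real)^n = (-1)^n * (2^n)^4"
  proof -
    have a: "(-16::real) = (-1) * 2^4" by simp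
    have b: "((2::real)^4)^n = (2^n)^4" by (simp only: power_mult[symmetric] mult.commute)
    show ?thesis unfolding a power_mult_distrib b ..
  qed
  have ss: "((-1::real)^n) * ((-1)^n) = 1" by (simp add: power_add[symmetric])
  show ?thesis
    unfolding S Cb fm m16 F2
    by (rule gen_alg[OF ss]) (use Dpos npos in auto)
qed

end
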